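(* Let $C \subset \mathbb{R}^n$ be convex and closed with nonempty interior, and let $h\colon C\to\mathbb{R}$ be Legendre on $C$ and continuous on $C$, such that condition (A) holds: for every sequence $(x_k)_{k\in\mathbb{N}} \subset \mathrm{int}\, C$ and every $y \in C$, if $D_h(y,x_k) \to 0$ then $x_k \to y$. Then $h$ is strictly convex on $C$.
   Context: A convex function $h \colon C \to \mathbb{R}$ on a convex set $C\subset\mathbb{R}^n$ with nonempty interior is called Legendre if (1) $h$ is continuously differentiable on $\mathrm{int}\, C$ and $\|\nabla h(x)\| \to +\infty$ whenever $x \in \mathrm{int}\, C$ approaches a point of the boundary of $C$; and (2) $h$ is strictly convex on $\mathrm{int}\, C$. The Bregman divergence is $D_h(y,x) = h(y) - h(x) - \langle \nabla h(x), y - x\rangle$ for $y \in C$, $x \in \mathrm{int}\, C$. *)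

theory Defs
  imports "HOL-Analysis.Analysis"
begin

definition strictly_convex_on :: "'a::real_vector set \<Rightarrow> ('a \<Rightarrow> real) \<Rightarrow> bool" where
  "strictly_convex_on S f \<longleftrightarrow>
     (\<forall>x\<in>S. \<forall>y\<in>S. x \<noteq> y \<longrightarrow> (\<forall>t::real. 0 < t \<and> t < 1 \<longrightarrow>
        f ((1 - t) *\<^sub>R x + t *\<^sub>R y) < (1 - t) * f x + t * f y))"

text \<open>The gradient of h at x (unique wherever h is differentiable at x).\<close>
definition grad :: "('a::euclidean_space \<Rightarrow> real) \<Rightarrow> 'a \<Rightarrow> 'a" where
  "grad h x = (SOME D. GDERIV h x :> D)"

definition legendre :: "'a::euclidean_space set \<Rightarrow> ('a \<Rightarrow> real) \<Rightarrow> bool" where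
  "legendre C h \<longleftrightarrow>
     convex C \<and> interior C \<noteq> {} \<and> convex_on C h \<and>
     (\<forall>x\<in>interior C. \<exists>D. GDERIV h x :> D) \<and>
     continuous_on (interior C) (grad h) \<and>
     (\<forall>b\<in>frontier C. filterlim (\<lambda>x. norm (grad h x)) at_top (at b within interior C)) \<and>
     strictly_convex_on (interior C) h"

definition bregman :: "('a::euclidean_space \<Rightarrow> real) \<Rightarrow> 'a \<Rightarrow> 'a \<Rightarrow> real" where
  "bregman h y x = h y - h x - inner (grad h x) (y - x)"

end

theory Submission
  imports Defs
begin

lemma grad_ineq:
  fixes h :: "'a::euclidean_space \<Rightarrow> real"
  assumes cC: "convex C" and ch: "convex_on C h" and w: "w \<in> interior C" and u: "u \<in> C"
    and g: "GDERIV h w :> g"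
  shows "h u \<ge> h w + inner g (u - w)"
proof -
  define v where "v = u - w"
  define A where "A = {s::real. w + s *\<^sub>R v \<in> C}"
  define p where "p = (\<lambda>s::real. h (w + s *\<^sub>R v))"
  have aff: "w + (a * s1 + b * s2) *\<^sub>R v = a *\<^sub>R (w + s1 *\<^sub>R v) + b *\<^sub>R (w + s2 *\<^sub>R v)"
    if "a + b = 1" for a b s1 s2 :: real
  proof -
    have "w = a *\<^sub>R w + b *\<^sub>R w" using that by (metis scaleR_add_left scaleR_one)
    then show ?thesis by (simp add: algebra_simps)
  qed
  have cA: "convex A"
    unfolding convex_def A_def
  proof (intro ballI allI impI, clarsimp)
    fix s1 s2 a b :: real
    assume "w + s1 *\<^sub>R v \<in> C" "w + s2 *\<^sub>R v \<in> C" "0 \<le> a" "0 \<le> b" "a + b = 1"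
    then show "w + (a * s1 + b * s2) *\<^sub>R v \<in> C"
      using aff[of a b s1 s2] cC by (simp add: convex_def)
  qed
  have conA: "connected A" using cA convex_connected by blast
  have "open ((\<lambda>s::real. w + s *\<^sub>R v) -` interior C)"
    by (intro continuous_open_vimage open_interior continuous_intros)
  then have "open {s::real. w + s *\<^sub>R v \<in> interior C}" by (simp add: vimage_def)
  moreover have "{s::real. w + s *\<^sub>R v \<in> interior C} \<subseteq> A"
    using interior_subset unfolding A_def by blast
  moreover have "0 \<in> {s::real. w + s *\<^sub>R v \<in> interior C}" using w by simp
  ultimately have i0: "0 \<in> interior A" by (meson interior_maximal subsetD)
  have oneA: "1 \<in> A" using u unfolding A_def v_def by simp
  have cp: "convex_on A p"
    unfolding convex_on_def
  proof (intro conjI cA ballI allI impI)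
    fix s1 s2 a b :: real
    assume "s1 \<in> A" "s2 \<in> A" "0 \<le> a" "0 \<le> b" "a + b = 1"
    then show "p (a *\<^sub>R s1 + b *\<^sub>R s2) \<le> a * p s1 + b * p s2"
    proof -
      have m: "w + s1 *\<^sub>R v \<in> C" "w + s2 *\<^sub>R v \<in> C" using \<open>s1 \<in> A\<close> \<open>s2 \<in> A\<close> unfolding A_def by auto
      have "h (a *\<^sub>R (w + s1 *\<^sub>R v) + b *\<^sub>R (w + s2 *\<^sub>R v)) \<le> a * h (w + s1 *\<^sub>R v) + b * h (w + s2 *\<^sub>R v)"
        using ch m \<open>0 \<le> a\<close> \<open>0 \<le> b\<close> \<open>a + b = 1\<close> unfolding convex_on_def by blast
      then show ?thesis using aff[OF \<open>a + b = 1\<close>, of s1 s2] unfolding p_def by simp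
    qed
  qed
  have hd: "(h has_derivative (\<lambda>k. inner k g)) (at (w + 0 *\<^sub>R v))"
    using g by (simp add: gderiv_def)
  have ld: "((\<lambda>s::real. w + s *\<^sub>R v) has_derivative (\<lambda>s. s *\<^sub>R v)) (at 0)"
    by (auto intro!: derivative_eq_intros)
  have "((\<lambda>s. h (w + s *\<^sub>R v)) has_derivative (\<lambda>s. inner (s *\<^sub>R v) g)) (at 0)"
    using diff_chain_at[OF ld hd] by (simp add: o_def)
  then have "(p has_field_derivative inner v g) (at 0)"
  proof -
    have "(\<lambda>s. s * (inner v g)) = (*) (inner v g)" by (auto simp: fun_eq_iff)
    with \<open>((\<lambda>s. h (w + s *\<^sub>R v)) has_derivative (\<lambda>s. inner (s *\<^sub>R v) g)) (at 0)\<close>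
    show ?thesis unfolding p_def has_field_derivative_def by simp
  qed
  then have "(p has_field_derivative inner v g) (at 0 within A)"
    by (rule has_field_derivative_at_within)
  from convex_on_imp_above_tangent[OF cp conA i0 oneA this]
  show ?thesis unfolding p_def v_def by (simp add: inner_commute)
qed

theorem lemma6:
  fixes C :: "'a::euclidean_space set" and h :: "'a \<Rightarrow> real"
  assumes "convex C" and "closed C" and "interior C \<noteq> {}"
    and "legendre C h"
    and "continuous_on C h"
    and condA: "\<And>(x :: nat \<Rightarrow> 'a) y. (\<forall>k. x k \<in> interior C) \<Longrightarrow> y \<in> C \<Longrightarrow>
                 (\<lambda>k. bregman h y (x k)) \<longlonglongrightarrow> 0 \<Longrightarrow> x \<longlonglongrightarrow> y"
  shows "strictly_convex_on C h"
  unfolding strictly_convex_on_def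
proof (intro ballI impI allI, rule ccontr)
  fix x y t
  assume x: "x \<in> C" and y: "y \<in> C" and xy: "x \<noteq> y" and t: "0 < t \<and> t < 1"
    and nlt: "\<not> h ((1 - t) *\<^sub>R x + t *\<^sub>R y) < (1 - t) * h x + t * h y"
  define z where "z = (1 - t) *\<^sub>R x + t *\<^sub>R y"
  have z: "z \<in> C" using x y t \<open>convex C\<close> unfolding z_def by (simp add: convex_def)
  have hz: "h z \<ge> (1 - t) * h x + t * h y" using nlt unfolding z_def by simp
  obtain c where c: "c \<in> interior C" using \<open>interior C \<noteq> {}\<close> by blast
  have ch: "convex_on C h" using \<open>legendre C h\<close> unfolding legendre_def by blast
  have dif: "\<And>p. p \<in> interior C \<Longrightarrow> GDERIV h p :> grad h p"
    using \<open>legendre C h\<close> unfolding legendre_def grad_def by (metis someI_ex)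
  define s where "s = (\<lambda>k::nat. 1 / (real k + 2))"
  define w where "w = (\<lambda>k. z - s k *\<^sub>R (z - c))"
  have s0: "0 < s k" "s k \<le> 1/2" for k unfolding s_def by (auto simp: field_simps)
  have wi: "w k \<in> interior C" for k
    unfolding w_def using mem_interior_convex_shrink[OF \<open>convex C\<close> c z, of "s k"] s0[of k] by simp
  have wC: "w k \<in> C" for k using wi interior_subset by blast
  have Dnn: "bregman h u (w k) \<ge> 0" if "u \<in> C" for u k
    using grad_ineq[OF \<open>convex C\<close> ch wi[of k] that dif[OF wi[of k]]] unfolding bregman_def by linarith
  define e where "e = (\<lambda>k. h z - h (w k) - s k / (1 - s k) * (h (w k) - h c))"
  have Dz: "bregman h z (w k) \<le> e k" for k
  proof -
    let ?g = "grad h (w k)"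
    have "h c \<ge> h (w k) + inner ?g (c - w k)"
      using grad_ineq[OF \<open>convex C\<close> ch wi[of k] _ dif[OF wi]] c interior_subset by blast
    moreover have "c - w k = - (1 - s k) *\<^sub>R (z - c)" unfolding w_def by (simp add: algebra_simps)
    ultimately have "h c \<ge> h (w k) - (1 - s k) * inner ?g (z - c)" by (simp add: algebra_simps)
    then have "inner ?g (z - c) \<ge> (h (w k) - h c) / (1 - s k)"
      using s0[of k] by (simp add: field_simps)
    then have "s k * inner ?g (z - c) \<ge> s k * ((h (w k) - h c) / (1 - s k))"
      by (rule mult_left_mono) (use s0[of k] in auto)
    moreover have "z - w k = s k *\<^sub>R (z - c)" unfolding w_def by simp
    ultimately show ?thesis unfolding bregman_def e_def by simp
  qed
  have comb: "(1 - t) * bregman h x (w k) + t * bregman h y (w k) \<le> e k" for k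
  proof -
    let ?g = "grad h (w k)"
    have "(1 - t) * bregman h x (w k) + t * bregman h y (w k)
        = (1 - t) * h x + t * h y - h (w k) - inner ?g (z - w k)"
      unfolding bregman_def z_def by (simp add: algebra_simps inner_diff_right)
    also have "\<dots> \<le> bregman h z (w k)" unfolding bregman_def using hz by simp
    finally show ?thesis using Dz[of k] by simp
  qed
  have seq: "s = (\<lambda>n. inverse (real (Suc (Suc n))))"
    unfolding s_def by (auto simp: divide_inverse add.commute)
  have slim: "s \<longlonglongrightarrow> 0" unfolding seq
    using LIMSEQ_Suc[OF LIMSEQ_inverse_real_of_nat] .
  have wlim: "w \<longlonglongrightarrow> z" unfolding w_def
    using tendsto_diff[OF tendsto_const tendsto_scaleR[OF slim tendsto_const], of z "z - c"] by simp
  have hlim: "(\<lambda>k. h (w k)) \<longlonglongrightarrow> h z"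
    using continuous_on_tendsto_compose[OF \<open>continuous_on C h\<close> wlim z] wC by simp
  have elim: "e \<longlonglongrightarrow> 0" unfolding e_def
    using tendsto_diff[OF tendsto_diff[OF tendsto_const hlim, of "h z"]
        tendsto_mult[OF tendsto_divide[OF slim tendsto_diff[OF tendsto_const slim, of 1]]
          tendsto_diff[OF hlim tendsto_const, of "h c"]]] by simp
  have "(\<lambda>k. bregman h x (w k)) \<longlonglongrightarrow> 0"
  proof (rule tendsto_sandwich[of "\<lambda>_. 0" _ _ "\<lambda>k. e k / (1 - t)"])
    show "\<forall>\<^sub>F k in sequentially. 0 \<le> bregman h x (w k)" using Dnn x by simp
    show "\<forall>\<^sub>F k in sequentially. bregman h x (w k) \<le> e k / (1 - t)"
    proof (rule always_eventually, rule allI)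
      fix k
      have "(1 - t) * bregman h x (w k) \<le> e k" using comb[of k] Dnn[OF y, of k] t mult_nonneg_nonneg[of t "bregman h y (w k)"] by linarith
      then show "bregman h x (w k) \<le> e k / (1 - t)" using t by (simp add: field_simps)
    qed
    show "(\<lambda>k. e k / (1 - t)) \<longlonglongrightarrow> 0" using tendsto_divide_zero[OF elim] by simp
  qed simp
  then have wx: "w \<longlonglongrightarrow> x" using condA wi x by blast
  have "(\<lambda>k. bregman h y (w k)) \<longlonglongrightarrow> 0"
  proof (rule tendsto_sandwich[of "\<lambda>_. 0" _ _ "\<lambda>k. e k / t"])
    show "\<forall>\<^sub>F k in sequentially. 0 \<le> bregman h y (w k)" using Dnn y by simp
    show "\<forall>\<^sub>F k in sequentially. bregman h y (w k) \<le> e k / t"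
    proof (rule always_eventually, rule allI)
      fix k
      have "t * bregman h y (w k) \<le> e k"
        using comb[of k] Dnn[OF x, of k] t mult_nonneg_nonneg[of "1 - t" "bregman h x (w k)"] by linarith
      then show "bregman h y (w k) \<le> e k / t" using t by (simp add: field_simps)
    qed
    show "(\<lambda>k. e k / t) \<longlonglongrightarrow> 0" using tendsto_divide_zero[OF elim] by simp
  qed simp
  then have wy: "w \<longlonglongrightarrow> y" using condA wi y by blast
  from LIMSEQ_unique[OF wx wy] xy show False by simp
qed

end
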